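(* Let $\mathcal{C}_1$ and $\mathcal{C}_2$ be two Wilf-equivalent permutation classes with $p$-bases $\mathcal{B}_1$ and $\mathcal{B}_2$ respectively. For $i\in\{1,2\}$ and $x\in\{top,bottom,right,left\}$ let $\mathcal{M}_{i,x}=\{M_{\tau,x}:\tau\in\mathcal{B}_i\}$. Then the eight permutation classes $Av_{\mathfrak{S}}(\mathcal{M}_{i,x})$, $i\in\{1,2\}$, $x\in\{top,bottom,right,left\}$, are all Wilf-equivalent.
   Context: A permutation $\sigma$ of $\{1,\dots,n\}$ is identified with its permutation matrix ($M_\sigma(i,j)=1$ iff $i=\sigma(j)$, rows numbered bottom to top). A matrix is a submatrix of another if obtained by deleting rows and/or columns; the pattern order on permutations is this order restricted to permutation matrices, and a permutation class is a set closed downward for it. The $p$-basis of a class $\mathcal{C}$ is the set of permutations not in $\mathcal{C}$ that are minimal for the pattern order among those not in $\mathcal{C}$. Two permutation classes are Wilf-equivalent if for every $n$ they contain the same number of permutations of size $n$. For a permutation $\tau$, $M_{\tau,top}$ (resp. $M_{\tau,bottom}$) is the matrix obtained by adding a row of $0$'s above (resp. below) the permutation matrix of $\tau$, and $M_{\tau,right}$ (resp. $M_{\tau,left}$) by adding a column of $0$'s to its right (resp. left). $Av_{\mathfrak{S}}(\mathcal{M})$ is the set of permutations with no submatrix in $\mathcal{M}$. *)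

theory Defs
  imports Main
begin

text \<open>A permutation sigma of {1..n} is represented by the list [sigma(1),...,sigma(n)].\<close>
definition is_perm :: "nat list \<Rightarrow> bool" where
  "is_perm s \<longleftrightarrow> distinct s \<and> set s = {1..length s}"

text \<open>A 0/1 matrix: (number of rows, number of columns, entries).
  Rows and columns are indexed from 0; row 0 is the bottom row, column 0 the leftmost.
  Only entries with row < number of rows and column < number of columns are meaningful.\<close>
type_synonym bmat = "nat \<times> nat \<times> (nat \<Rightarrow> nat \<Rightarrow> bool)"

definition nrows :: "bmat \<Rightarrow> nat" where "nrows M = fst M"
definition ncols :: "bmat \<Rightarrow> nat" where "ncols M = fst (snd M)"
definition entry :: "bmat \<Rightarrow> nat \<Rightarrow> nat \<Rightarrow> bool" where "entry M = snd (snd M)"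

text \<open>Permutation matrix: M(i,j) = 1 iff i = sigma(j) (1-indexed), i.e. row i (0-indexed, from
  the bottom) and column j (0-indexed) carry a 1 iff i + 1 = sigma(j + 1).\<close>
definition perm_mat :: "nat list \<Rightarrow> bmat" where
  "perm_mat s = (length s, length s, (\<lambda>i j. i + 1 = s ! j))"

definition submatrix :: "bmat \<Rightarrow> bmat \<Rightarrow> bool" where
  "submatrix A B \<longleftrightarrow>
     (\<exists>r c. strict_mono_on {..<nrows A} r \<and> strict_mono_on {..<ncols A} c \<and>
            r ` {..<nrows A} \<subseteq> {..<nrows B} \<and> c ` {..<ncols A} \<subseteq> {..<ncols B} \<and>
            (\<forall>i<nrows A. \<forall>j<ncols A. entry A i j = entry B (r i) (c j)))"

definition pattern :: "nat list \<Rightarrow> nat list \<Rightarrow> bool" where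
  "pattern p s \<longleftrightarrow> is_perm p \<and> is_perm s \<and> submatrix (perm_mat p) (perm_mat s)"

definition perm_class :: "nat list set \<Rightarrow> bool" where
  "perm_class C \<longleftrightarrow> (\<forall>s\<in>C. is_perm s) \<and> (\<forall>s\<in>C. \<forall>p. pattern p s \<longrightarrow> p \<in> C)"

definition p_basis :: "nat list set \<Rightarrow> nat list set" where
  "p_basis C = {s. is_perm s \<and> s \<notin> C \<and> (\<forall>p. pattern p s \<and> p \<noteq> s \<longrightarrow> p \<in> C)}"

definition wilf_equiv :: "nat list set \<Rightarrow> nat list set \<Rightarrow> bool" where
  "wilf_equiv C D \<longleftrightarrow> (\<forall>n. card {s\<in>C. length s = n} = card {s\<in>D. length s = n})"

datatype side = Top | Bottom | Right | Left

text \<open>M_{tau,x}: add a zero row above/below or a zero column right/left of the permutation matrix.\<close>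
fun ext_mat :: "nat list \<Rightarrow> side \<Rightarrow> bmat" where
  "ext_mat t Top = (length t + 1, length t, (\<lambda>i j. i < length t \<and> entry (perm_mat t) i j))"
| "ext_mat t Bottom = (length t + 1, length t, (\<lambda>i j. 0 < i \<and> entry (perm_mat t) (i - 1) j))"
| "ext_mat t Right = (length t, length t + 1, (\<lambda>i j. j < length t \<and> entry (perm_mat t) i j))"
| "ext_mat t Left = (length t, length t + 1, (\<lambda>i j. 0 < j \<and> entry (perm_mat t) i (j - 1)))"

definition Av_mat :: "bmat set \<Rightarrow> nat list set" where
  "Av_mat Ms = {s. is_perm s \<and> (\<forall>M\<in>Ms. \<not> submatrix M (perm_mat s))}"

definition ext_set :: "nat list set \<Rightarrow> side \<Rightarrow> bmat set" where
  "ext_set B x = (\<lambda>t. ext_mat t x) ` B"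

end

theory Submission
  imports Defs
begin

definition emb :: "nat list \<Rightarrow> nat list \<Rightarrow> (nat \<Rightarrow> nat) \<Rightarrow> (nat \<Rightarrow> nat) \<Rightarrow> bool" where
  "emb t s r c \<longleftrightarrow> strict_mono_on {..<length t} r \<and> strict_mono_on {..<length t} c \<and>
     r ` {..<length t} \<subseteq> {..<length s} \<and> c ` {..<length t} \<subseteq> {..<length s} \<and>
     (\<forall>i<length t. \<forall>j<length t. (i + 1 = t ! j) = (r i + 1 = s ! (c j)))"

lemma pattern_emb: "pattern t s \<longleftrightarrow> is_perm t \<and> is_perm s \<and> (\<exists>r c. emb t s r c)"
  unfolding pattern_def submatrix_def emb_def perm_mat_def nrows_def ncols_def entry_def by simp

lemma perm_nth: "is_perm t \<Longrightarrow> j < length t \<Longrightarrow> t ! j \<ge> 1 \<and> t ! j \<le> length t"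
  unfolding is_perm_def by (metis atLeastAtMost_iff nth_mem)

lemma perm_index: "is_perm t \<Longrightarrow> i < length t \<Longrightarrow> \<exists>j<length t. t ! j = i+1"
proof -
  assume "is_perm t" "i < length t"
  then have "i + 1 \<in> set t" unfolding is_perm_def by auto
  then show ?thesis by (simp add: in_set_conv_nth)
qed

lemma emb_val: "emb t s r c \<Longrightarrow> is_perm t \<Longrightarrow> j < length t \<Longrightarrow> s ! (c j) = r (t ! j - 1) + 1"
proof -
  assume e: "emb t s r c" and p: "is_perm t" and j: "j < length t"
  have "t ! j - 1 < length t" "t ! j - 1 + 1 = t ! j" using perm_nth[OF p j] by auto
  then show ?thesis using e j unfolding emb_def by metis
qed

lemma emb_row_col: "emb t s r c \<Longrightarrow> is_perm t \<Longrightarrow> s ! a = b + 1 \<Longrightarrow> b \<notin> r ` {..<length t}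
   \<Longrightarrow> a \<notin> c ` {..<length t}"
proof
  assume e: "emb t s r c" and p: "is_perm t" and sa: "s ! a = b + 1" and b: "b \<notin> r ` {..<length t}"
    and "a \<in> c ` {..<length t}"
  then obtain j where j: "j < length t" "c j = a" by auto
  have "r (t ! j - 1) = b" using emb_val[OF e p j(1)] sa j by simp
  moreover have "t ! j - 1 < length t" using perm_nth[OF p j(1)] by auto
  ultimately show False using b by auto
qed

lemma emb_col_row: "emb t s r c \<Longrightarrow> is_perm t \<Longrightarrow> is_perm s \<Longrightarrow> a < length s \<Longrightarrow> s ! a = b + 1
   \<Longrightarrow> a \<notin> c ` {..<length t} \<Longrightarrow> i < length t \<Longrightarrow> r i + 1 \<noteq> s ! a"
proof
  assume e: "emb t s r c" and p: "is_perm t" and ps: "is_perm s" and a: "a < length s"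
    and sa: "s ! a = b + 1" and ac: "a \<notin> c ` {..<length t}" and i: "i < length t"
    and eq: "r i + 1 = s ! a"
  obtain j where j: "j < length t" "t ! j = i + 1" using perm_index[OF p i] by auto
  have "(i+1 = t!j) = (r i + 1 = s!(c j))" using e i j(1) unfolding emb_def by blast
  then have "r i + 1 = s ! (c j)" using j(2) by simp
  moreover have "c j < length s" using e j unfolding emb_def by auto
  ultimately have "c j = a" using eq ps a unfolding is_perm_def by (metis nth_eq_iff_index_eq)
  then show False using ac j by auto
qed

lemma emb_col_row': "emb t s r c \<Longrightarrow> is_perm t \<Longrightarrow> is_perm s \<Longrightarrow> a < length s \<Longrightarrow> s ! a = b + 1
   \<Longrightarrow> a \<notin> c ` {..<length t} \<Longrightarrow> b \<notin> r ` {..<length t}"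
  using emb_col_row by fastforce


lemma pattern_refl: "is_perm s \<Longrightarrow> pattern s s"
proof -
  assume p: "is_perm s"
  have "emb s s id id" unfolding emb_def by (simp add: strict_mono_on_def)
  then show ?thesis using p pattern_emb by blast
qed

lemma emb_trans: "emb t s r c \<Longrightarrow> emb s u r' c' \<Longrightarrow> emb t u (r' \<circ> r) (c' \<circ> c)"
proof -
  assume e1: "emb t s r c" and e2: "emb s u r' c'"
  have rl: "\<And>i. i < length t \<Longrightarrow> r i < length s" and cl: "\<And>i. i < length t \<Longrightarrow> c i < length s"
    using e1 unfolding emb_def by auto
  show ?thesis unfolding emb_def
  proof (intro conjI)
    show "strict_mono_on {..<length t} (r' \<circ> r)" using e1 e2 rl unfolding emb_def strict_mono_on_def by auto
    show "strict_mono_on {..<length t} (c' \<circ> c)" using e1 e2 cl unfolding emb_def strict_mono_on_def by auto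
    show "(r' \<circ> r) ` {..<length t} \<subseteq> {..<length u}" using e2 rl unfolding emb_def by auto
    show "(c' \<circ> c) ` {..<length t} \<subseteq> {..<length u}" using e2 cl unfolding emb_def by auto
    show "\<forall>i<length t. \<forall>j<length t. (i + 1 = t ! j) = ((r' \<circ> r) i + 1 = u ! (c' \<circ> c) j)"
    proof (intro allI impI)
      fix i j assume i: "i < length t" and j: "j < length t"
      have "(i + 1 = t ! j) = (r i + 1 = s ! c j)" using e1 i j unfolding emb_def by blast
      also have "\<dots> = (r' (r i) + 1 = u ! c' (c j))" using e2 rl[OF i] cl[OF j] unfolding emb_def by blast
      finally show "(i + 1 = t ! j) = ((r' \<circ> r) i + 1 = u ! (c' \<circ> c) j)" by simp
    qed
  qed
qed

lemma pattern_trans: "pattern t s \<Longrightarrow> pattern s u \<Longrightarrow> pattern t u"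
proof -
  assume p1: "pattern t s" and p2: "pattern s u"
  from p1 obtain r c where e1: "emb t s r c" and "is_perm t" unfolding pattern_emb by blast
  from p2 obtain r' c' where e2: "emb s u r' c'" and "is_perm u" unfolding pattern_emb by blast
  have "emb t u (r' \<circ> r) (c' \<circ> c)" by (rule emb_trans[OF e1 e2])
  then show ?thesis using \<open>is_perm t\<close> \<open>is_perm u\<close> unfolding pattern_emb by blast
qed

lemma smono_card: "strict_mono_on {..<k} (c::nat\<Rightarrow>nat) \<Longrightarrow> c ` {..<k} \<subseteq> {..<n} \<Longrightarrow> k \<le> n"
proof -
  assume m: "strict_mono_on {..<k} c" and im: "c ` {..<k} \<subseteq> {..<n}"
  have "inj_on c {..<k}" using m strict_mono_on_imp_inj_on by blast
  then have "card (c ` {..<k}) = k" by (simp add: card_image)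
  moreover have "card (c ` {..<k}) \<le> n" using card_mono[OF _ im] by simp
  ultimately show ?thesis by simp
qed

lemma smono_ge: "strict_mono_on {..<k} (c::nat\<Rightarrow>nat) \<Longrightarrow> j < k \<Longrightarrow> j \<le> c j"
proof (induction j)
  case 0 then show ?case by simp
next
  case (Suc j)
  then have "c j < c (Suc j)" by (auto simp: strict_mono_on_def)
  then show ?case using Suc by simp
qed

lemma smono_le: "strict_mono_on {..<k} (c::nat\<Rightarrow>nat) \<Longrightarrow> c ` {..<k} \<subseteq> {..<k} \<Longrightarrow> d < k \<Longrightarrow> c (k - 1 - d) \<le> k - 1 - d"
proof (induction d)
  case 0
  then have "k - 1 < k" by simp
  then have "c (k - 1) < k" using 0(2) by blast
  then show ?case by simp
next
  case (Suc d)
  then have "c (k - 1 - Suc d) < c (k - 1 - d)" by (auto simp: strict_mono_on_def)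
  then show ?case using Suc by simp
qed

lemma smono_id: "strict_mono_on {..<k} (c::nat\<Rightarrow>nat) \<Longrightarrow> c ` {..<k} \<subseteq> {..<k} \<Longrightarrow> j < k \<Longrightarrow> c j = j"
  using smono_ge[of k c j] smono_le[of k c "k - 1 - j"] by simp

lemma pattern_len: "pattern t s \<Longrightarrow> length t \<le> length s"
proof -
  assume "pattern t s"
  then obtain r c where e: "emb t s r c" unfolding pattern_emb by blast
  then have "strict_mono_on {..<length t} c" "c ` {..<length t} \<subseteq> {..<length s}" unfolding emb_def by auto
  then show ?thesis by (rule smono_card)
qed

lemma pattern_eq: "pattern t s \<Longrightarrow> length t = length s \<Longrightarrow> t = s"
proof -
  assume p: "pattern t s" and l: "length t = length s"
  then obtain r c where e: "emb t s r c" and pt: "is_perm t" and ps: "is_perm s" unfolding pattern_emb by blast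
  have "strict_mono_on {..<length t} r" "r ` {..<length t} \<subseteq> {..<length t}"
    "strict_mono_on {..<length t} c" "c ` {..<length t} \<subseteq> {..<length t}"
    using e l unfolding emb_def by auto
  then have rid: "\<And>i. i < length t \<Longrightarrow> r i = i" and cid: "\<And>i. i < length t \<Longrightarrow> c i = i"
    using smono_id by blast+
  show ?thesis
  proof (rule nth_equalityI)
    show "length t = length s" by fact
    fix j assume j: "j < length t"
    have "s ! (c j) = r (t ! j - 1) + 1" by (rule emb_val[OF e pt j])
    moreover have "t ! j - 1 < length t" "t ! j \<ge> 1" using perm_nth[OF pt j] by auto
    ultimately show "t ! j = s ! j" using rid cid j by simp
  qed
qed

lemma class_char: "perm_class C \<Longrightarrow> s \<in> C \<longleftrightarrow> is_perm s \<and> (\<forall>t\<in>p_basis C. \<not> pattern t s)"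
proof
  assume pc: "perm_class C" and s: "s \<in> C"
  show "is_perm s \<and> (\<forall>t\<in>p_basis C. \<not> pattern t s)"
    using pc s unfolding perm_class_def p_basis_def by blast
next
  assume pc: "perm_class C" and h: "is_perm s \<and> (\<forall>t\<in>p_basis C. \<not> pattern t s)"
  show "s \<in> C"
  proof (rule ccontr)
    assume ns: "s \<notin> C"
    define P where "P = {p. pattern p s \<and> p \<notin> C}"
    have "s \<in> P" using ns h pattern_refl P_def by auto
    then obtain p where pP: "p \<in> P" and pmin: "\<And>q. q \<in> P \<Longrightarrow> length p \<le> length q"
      using ex_has_least_nat[of "\<lambda>p. p \<in> P" s length] by blast
    have "p \<in> p_basis C"
      unfolding p_basis_def
    proof (intro CollectI conjI allI impI)
      show "is_perm p" using pP P_def pattern_emb by auto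
      show "p \<notin> C" using pP P_def by auto
      fix q assume q: "pattern q p \<and> q \<noteq> p"
      show "q \<in> C"
      proof (rule ccontr)
        assume "q \<notin> C"
        then have "q \<in> P" using q pP P_def pattern_trans by blast
        then have "length p \<le> length q" by (rule pmin)
        then have "length q = length p" using pattern_len q by fastforce
        then show False using pattern_eq q by blast
      qed
    qed
    then show False using h pP P_def by auto
  qed
qed


definition shift :: "nat \<Rightarrow> nat \<Rightarrow> nat" where "shift a j = (if j < a then j else Suc j)"
definition unshift :: "nat \<Rightarrow> nat \<Rightarrow> nat" where "unshift a p = (if p < a then p else p - 1)"

lemma shift_unshift: "p \<noteq> a \<Longrightarrow> shift a (unshift a p) = p" unfolding shift_def unshift_def by auto
lemma unshift_shift: "unshift a (shift a j) = j" unfolding shift_def unshift_def by auto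
lemma shift_ne: "shift a j \<noteq> a" unfolding shift_def by auto
lemma shift_ne': "a \<noteq> shift a j" unfolding shift_def by auto
lemma shift_less: "j < n \<Longrightarrow> shift a j < Suc n" unfolding shift_def by auto
lemma unshift_less: "p < Suc n \<Longrightarrow> p \<noteq> a \<Longrightarrow> a < Suc n \<Longrightarrow> unshift a p < n" unfolding unshift_def by auto
lemma shift_mono: "i < j \<Longrightarrow> shift a i < shift a j" unfolding shift_def by auto
lemma unshift_mono: "i < j \<Longrightarrow> i \<noteq> a \<Longrightarrow> j \<noteq> a \<Longrightarrow> unshift a i < unshift a j" unfolding unshift_def by auto
lemma shift_inj: "shift a i = shift a j \<longleftrightarrow> i = j" unfolding shift_def by auto
lemma unshift_inj: "i \<noteq> a \<Longrightarrow> j \<noteq> a \<Longrightarrow> unshift a i = unshift a j \<longleftrightarrow> i = j" unfolding unshift_def by auto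

definition del :: "nat list \<Rightarrow> nat \<Rightarrow> nat \<Rightarrow> nat list" where
  "del s a b = map (\<lambda>j. unshift b (s ! (shift a j) - 1) + 1) [0..<length s - 1]"
definition ins :: "nat list \<Rightarrow> nat \<Rightarrow> nat \<Rightarrow> nat list" where
  "ins s a b = map (\<lambda>p. if p = a then b + 1 else shift b (s ! (unshift a p) - 1) + 1) [0..<Suc (length s)]"

lemma del_len[simp]: "length (del s a b) = length s - 1" unfolding del_def by simp
lemma del_nth: "j < length s - 1 \<Longrightarrow> del s a b ! j = unshift b (s ! (shift a j) - 1) + 1" unfolding del_def by simp
lemma ins_len[simp]: "length (ins s a b) = Suc (length s)" unfolding ins_def by simp
lemma ins_nth: "p < Suc (length s) \<Longrightarrow> ins s a b ! p = (if p = a then b + 1 else shift b (s ! (unshift a p) - 1) + 1)"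
  unfolding ins_def by (simp del: upt_Suc)

lemma perm_of: "distinct s \<Longrightarrow> (\<And>j. j < length s \<Longrightarrow> 1 \<le> s ! j \<and> s ! j \<le> length s) \<Longrightarrow> is_perm s"
proof -
  assume d: "distinct s" and h: "\<And>j. j < length s \<Longrightarrow> 1 \<le> s ! j \<and> s ! j \<le> length s"
  have sub: "set s \<subseteq> {1..length s}" using h by (auto simp: in_set_conv_nth)
  have "card (set s) = card {1..length s}" using d by (simp add: distinct_card)
  then have "set s = {1..length s}" using card_subset_eq[OF _ sub] by simp
  then show ?thesis using d unfolding is_perm_def by simp
qed

lemma perm_inj: "is_perm s \<Longrightarrow> i < length s \<Longrightarrow> j < length s \<Longrightarrow> s ! i = s ! j \<longleftrightarrow> i = j"
  unfolding is_perm_def by (simp add: nth_eq_iff_index_eq)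

lemma perm_ne: "is_perm s \<Longrightarrow> a < length s \<Longrightarrow> s ! a = b + 1 \<Longrightarrow> j < length s - 1 \<Longrightarrow>
  shift a j < length s \<and> s ! (shift a j) \<noteq> b + 1 \<and> s ! (shift a j) - 1 \<noteq> b \<and> 1 \<le> s ! (shift a j)
  \<and> s ! (shift a j) \<le> length s"
proof -
  assume p: "is_perm s" and a: "a < length s" and sa: "s ! a = b + 1" and j: "j < length s - 1"
  have l: "shift a j < length s" using shift_less[of j "length s - 1" a] j by simp
  have "s ! (shift a j) \<noteq> s ! a" using perm_inj[OF p l a] shift_ne by simp
  then show ?thesis using l sa perm_nth[OF p l] by auto
qed

lemma del_perm: "is_perm s \<Longrightarrow> a < length s \<Longrightarrow> s ! a = b + 1 \<Longrightarrow> is_perm (del s a b)"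
proof (rule perm_of)
  assume p: "is_perm s" and a: "a < length s" and sa: "s ! a = b + 1"
  have bl: "b < length s" using perm_nth[OF p a] sa by simp
  show "distinct (del s a b)"
  proof (subst distinct_conv_nth, intro allI impI)
    fix i j assume i: "i < length (del s a b)" and j: "j < length (del s a b)" and ij: "i \<noteq> j"
    have pi: "shift a i < length s" "s ! (shift a i) - 1 \<noteq> b" "1 \<le> s ! (shift a i)" using perm_ne[OF p a sa, of i] i by auto
    have pj: "shift a j < length s" "s ! (shift a j) - 1 \<noteq> b" "1 \<le> s ! (shift a j)" using perm_ne[OF p a sa, of j] j by auto
    have "s ! (shift a i) \<noteq> s ! (shift a j)" using perm_inj[OF p pi(1) pj(1)] shift_inj ij by simp
    then have "s ! (shift a i) - 1 \<noteq> s ! (shift a j) - 1" using pi(3) pj(3) by simp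
    then show "del s a b ! i \<noteq> del s a b ! j" using i j del_nth unshift_inj[OF pi(2) pj(2)] by simp
  qed
  fix j assume j: "j < length (del s a b)"
  have pj: "s ! (shift a j) - 1 \<noteq> b" "1 \<le> s ! (shift a j)" "s ! (shift a j) \<le> length s" using perm_ne[OF p a sa, of j] j by auto
  show "1 \<le> del s a b ! j \<and> del s a b ! j \<le> length (del s a b)"
    using j del_nth[of j s a b] pj bl unfolding unshift_def by auto
qed

lemma ins_perm: "is_perm s \<Longrightarrow> a \<le> length s \<Longrightarrow> b \<le> length s \<Longrightarrow> is_perm (ins s a b)"
proof (rule perm_of)
  assume p: "is_perm s" and a: "a \<le> length s" and b: "b \<le> length s"
  have nth': "\<And>q. q < Suc (length s) \<Longrightarrow> q \<noteq> a \<Longrightarrow> unshift a q < length s \<and> 1 \<le> s ! unshift a q \<and> s ! unshift a q \<le> length s"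
  proof -
    fix q assume "q < Suc (length s)" "q \<noteq> a"
    then have "unshift a q < length s" using unshift_less[of q "length s" a] a by simp
    then show "unshift a q < length s \<and> 1 \<le> s ! unshift a q \<and> s ! unshift a q \<le> length s" using perm_nth[OF p] by auto
  qed
  show "distinct (ins s a b)"
  proof (subst distinct_conv_nth, intro allI impI)
    fix i j assume i: "i < length (ins s a b)" and j: "j < length (ins s a b)" and ij: "i \<noteq> j"
    show "ins s a b ! i \<noteq> ins s a b ! j"
    proof (cases "i = a \<or> j = a")
      case True
      then show ?thesis using i j ij ins_nth[of i s a b] ins_nth[of j s a b] shift_ne[of b] shift_ne'[of b] by auto
    next
      case False
      then have ni: "unshift a i < length s" "1 \<le> s ! unshift a i" and nj: "unshift a j < length s" "1 \<le> s ! unshift a j"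
        using nth' i j by auto
      have "unshift a i \<noteq> unshift a j" using unshift_inj[of i a j] False ij by simp
      then have "s ! unshift a i \<noteq> s ! unshift a j" using perm_inj[OF p ni(1) nj(1)] by simp
      then have "s ! unshift a i - 1 \<noteq> s ! unshift a j - 1" using ni nj by simp
      then show ?thesis using False i j ins_nth[of i s a b] ins_nth[of j s a b] shift_inj by simp
    qed
  qed
  fix q assume q: "q < length (ins s a b)"
  show "1 \<le> ins s a b ! q \<and> ins s a b ! q \<le> length (ins s a b)"
  proof (cases "q = a")
    case True then show ?thesis using q b ins_nth[of q s a b] by simp
  next
    case False
    then have "1 \<le> s ! unshift a q" "s ! unshift a q \<le> length s" using nth' q by auto
    then show ?thesis using q False ins_nth[of q s a b] unfolding shift_def by auto
  qed
qed

lemma ins_a: "a \<le> length s \<Longrightarrow> ins s a b ! a = b + 1" using ins_nth[of a s a b] by simp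

lemma del_ins: "is_perm s \<Longrightarrow> a \<le> length s \<Longrightarrow> del (ins s a b) a b = s"
proof (rule nth_equalityI)
  assume p: "is_perm s" and a: "a \<le> length s"
  show "length (del (ins s a b) a b) = length s" by simp
  fix j assume j: "j < length (del (ins s a b) a b)"
  then have j': "j < length s" by simp
  have l: "shift a j < Suc (length s)" using shift_less j' by blast
  have "ins s a b ! shift a j = shift b (s ! j - 1) + 1" using ins_nth[OF l, of a b] shift_ne unshift_shift by simp
  moreover have "1 \<le> s ! j" using perm_nth[OF p j'] by simp
  ultimately show "del (ins s a b) a b ! j = s ! j" using del_nth[of j "ins s a b" a b] j' unshift_shift by simp
qed

lemma ins_del: "is_perm s \<Longrightarrow> a < length s \<Longrightarrow> s ! a = b + 1 \<Longrightarrow> ins (del s a b) a b = s"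
proof (rule nth_equalityI)
  assume p: "is_perm s" and a: "a < length s" and sa: "s ! a = b + 1"
  show "length (ins (del s a b) a b) = length s" using a by simp
  fix q assume q: "q < length (ins (del s a b) a b)"
  then have q': "q < length s" using a by simp
  show "ins (del s a b) a b ! q = s ! q"
  proof (cases "q = a")
    case True then show ?thesis using q ins_nth[of q "del s a b" a b] sa by simp
  next
    case False
    have u: "unshift a q < length s - 1" using unshift_less[of q "length s - 1" a] q' a False by simp
    have sq: "shift a (unshift a q) = q" using shift_unshift False by simp
    have pq: "s ! q - 1 \<noteq> b" "1 \<le> s ! q" using perm_ne[OF p a sa u] sq by auto
    have "ins (del s a b) a b ! q = shift b (del s a b ! unshift a q - 1) + 1"
      using q ins_nth[of q "del s a b" a b] False by simp
    also have "\<dots> = shift b (unshift b (s ! q - 1)) + 1" using del_nth[OF u, of a b] sq by simp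
    also have "\<dots> = s ! q" using shift_unshift[OF pq(1)] pq(2) by simp
    finally show ?thesis .
  qed
qed


lemma key1: "1 \<le> w \<Longrightarrow> w - 1 \<noteq> b \<Longrightarrow> (x + 1 = unshift b (w - 1) + 1) = (shift b x + 1 = w)"
  unfolding shift_def unshift_def by auto
lemma key2: "1 \<le> w \<Longrightarrow> w - 1 \<noteq> b \<Longrightarrow> y \<noteq> b \<Longrightarrow> (unshift b y + 1 = unshift b (w - 1) + 1) = (y + 1 = w)"
  unfolding shift_def unshift_def by auto

lemma emb_del_to_s:
  assumes pt: "is_perm t" and ps: "is_perm s" and a: "a < length s" and sa: "s ! a = b + 1"
    and e: "emb t (del s a b) r c"
  shows "emb t s (shift b \<circ> r) (shift a \<circ> c) \<and> a \<notin> (shift a \<circ> c) ` {..<length t} \<and> b \<notin> (shift b \<circ> r) ` {..<length t}"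
proof -
  have rl: "\<And>i. i < length t \<Longrightarrow> r i < length s - 1" and cl: "\<And>i. i < length t \<Longrightarrow> c i < length s - 1"
    using e unfolding emb_def by auto
  have sm: "strict_mono_on {..<length t} r" "strict_mono_on {..<length t} c" using e unfolding emb_def by auto
  have cond: "\<And>i j. i < length t \<Longrightarrow> j < length t \<Longrightarrow> (i + 1 = t ! j) = (r i + 1 = del s a b ! c j)"
    using e unfolding emb_def by blast
  have "emb t s (shift b \<circ> r) (shift a \<circ> c)" unfolding emb_def
  proof (intro conjI)
    show "strict_mono_on {..<length t} (shift b \<circ> r)" using sm(1) shift_mono unfolding strict_mono_on_def by auto
    show "strict_mono_on {..<length t} (shift a \<circ> c)" using sm(2) shift_mono unfolding strict_mono_on_def by auto
    show "(shift b \<circ> r) ` {..<length t} \<subseteq> {..<length s}" using rl shift_less[of _ "length s - 1" b] a by fastforce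
    show "(shift a \<circ> c) ` {..<length t} \<subseteq> {..<length s}" using cl shift_less[of _ "length s - 1" a] a by fastforce
    show "\<forall>i<length t. \<forall>j<length t. (i + 1 = t ! j) = ((shift b \<circ> r) i + 1 = s ! (shift a \<circ> c) j)"
    proof (intro allI impI)
      fix i j assume i: "i < length t" and j: "j < length t"
      have pn: "s ! (shift a (c j)) - 1 \<noteq> b" "1 \<le> s ! (shift a (c j))" using perm_ne[OF ps a sa cl[OF j]] by auto
      have "(i + 1 = t ! j) = (r i + 1 = del s a b ! c j)" using cond i j by blast
      also have "\<dots> = (r i + 1 = unshift b (s ! (shift a (c j)) - 1) + 1)" using del_nth[OF cl[OF j]] by simp
      also have "\<dots> = (shift b (r i) + 1 = s ! (shift a (c j)))" using key1[OF pn(2) pn(1)] by simp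
      finally show "(i + 1 = t ! j) = ((shift b \<circ> r) i + 1 = s ! (shift a \<circ> c) j)" by simp
    qed
  qed
  moreover have "a \<notin> (shift a \<circ> c) ` {..<length t}" using shift_ne shift_ne' by auto
  moreover have "b \<notin> (shift b \<circ> r) ` {..<length t}" using shift_ne shift_ne' by auto
  ultimately show ?thesis by blast
qed

lemma emb_s_to_del:
  assumes pt: "is_perm t" and ps: "is_perm s" and a: "a < length s" and sa: "s ! a = b + 1"
    and e: "emb t s r c" and ac: "a \<notin> c ` {..<length t}" and br: "b \<notin> r ` {..<length t}"
  shows "emb t (del s a b) (unshift b \<circ> r) (unshift a \<circ> c)"
proof -
  have bl: "b < length s" using perm_nth[OF ps a] sa by simp
  have rl: "\<And>i. i < length t \<Longrightarrow> r i < length s" and cl: "\<And>i. i < length t \<Longrightarrow> c i < length s"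
    using e unfolding emb_def by auto
  have rb: "\<And>i. i < length t \<Longrightarrow> r i \<noteq> b" and ca: "\<And>i. i < length t \<Longrightarrow> c i \<noteq> a" using ac br by auto
  have sm: "strict_mono_on {..<length t} r" "strict_mono_on {..<length t} c" using e unfolding emb_def by auto
  have cond: "\<And>i j. i < length t \<Longrightarrow> j < length t \<Longrightarrow> (i + 1 = t ! j) = (r i + 1 = s ! c j)"
    using e unfolding emb_def by blast
  have ul: "\<And>j. j < length t \<Longrightarrow> unshift a (c j) < length s - 1"
    using cl ca unshift_less[of _ "length s - 1" a] a by fastforce
  show ?thesis unfolding emb_def
  proof (intro conjI)
    show "strict_mono_on {..<length t} (unshift b \<circ> r)" using sm(1) rb unshift_mono unfolding strict_mono_on_def by auto
    show "strict_mono_on {..<length t} (unshift a \<circ> c)" using sm(2) ca unshift_mono unfolding strict_mono_on_def by auto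
    show "(unshift b \<circ> r) ` {..<length t} \<subseteq> {..<length (del s a b)}"
      using rl rb unshift_less[of _ "length s - 1" b] bl by fastforce
    show "(unshift a \<circ> c) ` {..<length t} \<subseteq> {..<length (del s a b)}" using ul by auto
    show "\<forall>i<length t. \<forall>j<length t. (i + 1 = t ! j) = ((unshift b \<circ> r) i + 1 = del s a b ! (unshift a \<circ> c) j)"
    proof (intro allI impI)
      fix i j assume i: "i < length t" and j: "j < length t"
      have sh: "shift a (unshift a (c j)) = c j" using shift_unshift ca[OF j] by simp
      have pn: "s ! (c j) - 1 \<noteq> b" "1 \<le> s ! (c j)" using perm_ne[OF ps a sa ul[OF j]] sh by auto
      have "(i + 1 = t ! j) = (r i + 1 = s ! c j)" using cond i j by blast
      also have "\<dots> = (unshift b (r i) + 1 = unshift b (s ! (c j) - 1) + 1)" using key2[OF pn(2) pn(1) rb[OF i]] by simp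
      also have "\<dots> = (unshift b (r i) + 1 = del s a b ! unshift a (c j))" using del_nth[OF ul[OF j], of a b] sh by simp
      finally show "(i + 1 = t ! j) = ((unshift b \<circ> r) i + 1 = del s a b ! (unshift a \<circ> c) j)" by simp
    qed
  qed
qed

lemma avoid_iff_pattern:
  assumes pt: "is_perm t" and ps: "is_perm s" and a: "a < length s" and sa: "s ! a = b + 1"
  shows "(\<exists>r c. emb t s r c \<and> a \<notin> c ` {..<length t} \<and> b \<notin> r ` {..<length t}) \<longleftrightarrow> pattern t (del s a b)"
proof
  assume "\<exists>r c. emb t s r c \<and> a \<notin> c ` {..<length t} \<and> b \<notin> r ` {..<length t}"
  then obtain r c where "emb t s r c" "a \<notin> c ` {..<length t}" "b \<notin> r ` {..<length t}" by blast
  then have "emb t (del s a b) (unshift b \<circ> r) (unshift a \<circ> c)" using emb_s_to_del assms by blast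
  then show "pattern t (del s a b)" using pt del_perm[OF ps a sa] unfolding pattern_emb by blast
next
  assume "pattern t (del s a b)"
  then obtain r c where "emb t (del s a b) r c" unfolding pattern_emb by blast
  then show "\<exists>r c. emb t s r c \<and> a \<notin> c ` {..<length t} \<and> b \<notin> r ` {..<length t}"
    using emb_del_to_s[OF assms] by blast
qed


lemma sub_top_unf: "submatrix (ext_mat t Top) (perm_mat s) = (\<exists>R c. strict_mono_on {..<Suc (length t)} R \<and> strict_mono_on {..<length t} c \<and> R ` {..<Suc (length t)} \<subseteq> {..<length s} \<and> c ` {..<length t} \<subseteq> {..<length s} \<and> (\<forall>i<Suc (length t). \<forall>j<length t. (i < length t \<and> i + 1 = t ! j) = (R i + 1 = s ! c j)))"
  unfolding submatrix_def by (simp add: nrows_def ncols_def entry_def perm_mat_def)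
lemma sub_bot_unf: "submatrix (ext_mat t Bottom) (perm_mat s) = (\<exists>R c. strict_mono_on {..<Suc (length t)} R \<and> strict_mono_on {..<length t} c \<and> R ` {..<Suc (length t)} \<subseteq> {..<length s} \<and> c ` {..<length t} \<subseteq> {..<length s} \<and> (\<forall>i<Suc (length t). \<forall>j<length t. (0 < i \<and> i - 1 + 1 = t ! j) = (R i + 1 = s ! c j)))"
  unfolding submatrix_def by (simp add: nrows_def ncols_def entry_def perm_mat_def)
lemma sub_right_unf: "submatrix (ext_mat t Right) (perm_mat s) = (\<exists>r C. strict_mono_on {..<length t} r \<and> strict_mono_on {..<Suc (length t)} C \<and> r ` {..<length t} \<subseteq> {..<length s} \<and> C ` {..<Suc (length t)} \<subseteq> {..<length s} \<and> (\<forall>i<length t. \<forall>j<Suc (length t). (j < length t \<and> i + 1 = t ! j) = (r i + 1 = s ! C j)))"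
  unfolding submatrix_def by (simp add: nrows_def ncols_def entry_def perm_mat_def)
lemma sub_left_unf: "submatrix (ext_mat t Left) (perm_mat s) = (\<exists>r C. strict_mono_on {..<length t} r \<and> strict_mono_on {..<Suc (length t)} C \<and> r ` {..<length t} \<subseteq> {..<length s} \<and> C ` {..<Suc (length t)} \<subseteq> {..<length s} \<and> (\<forall>i<length t. \<forall>j<Suc (length t). (0 < j \<and> i + 1 = t ! (j - 1)) = (r i + 1 = s ! C j)))"
  unfolding submatrix_def by (simp add: nrows_def ncols_def entry_def perm_mat_def)

lemma emb_val': "emb t s r c \<Longrightarrow> is_perm t \<Longrightarrow> j < length t \<Longrightarrow> s ! (c j) = r (t ! j - 1) + 1 \<and> t ! j - 1 < length t"
  using emb_val perm_nth by fastforce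

lemma sub_top:
  assumes pt: "is_perm t" and ps: "is_perm s" and ls: "length s = Suc n"
  shows "submatrix (ext_mat t Top) (perm_mat s) \<longleftrightarrow> (\<exists>r c. emb t s r c \<and> n \<notin> r ` {..<length t})"
proof
  assume "submatrix (ext_mat t Top) (perm_mat s)"
  then obtain R c where h1: "strict_mono_on {..<Suc (length t)} R" and h2: "strict_mono_on {..<length t} c"
    and h3: "R ` {..<Suc (length t)} \<subseteq> {..<length s}" and h4: "c ` {..<length t} \<subseteq> {..<length s}"
    and h5: "\<forall>i<Suc (length t). \<forall>j<length t. (i < length t \<and> i + 1 = t ! j) = (R i + 1 = s ! c j)"
    unfolding sub_top_unf by blast
  have "emb t s R c" unfolding emb_def
  proof (intro conjI)
    show "strict_mono_on {..<length t} R" using h1 unfolding strict_mono_on_def by auto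
    show "R ` {..<length t} \<subseteq> {..<length s}" using h3 by (auto simp: image_subset_iff)
    show "\<forall>i<length t. \<forall>j<length t. (i + 1 = t ! j) = (R i + 1 = s ! c j)"
    proof (intro allI impI)
      fix i j assume i: "i < length t" and j: "j < length t"
      have "i < Suc (length t)" using i by simp
      then have "(i < length t \<and> i + 1 = t ! j) = (R i + 1 = s ! c j)" using h5 j by blast
      then show "(i + 1 = t ! j) = (R i + 1 = s ! c j)" using i by simp
    qed
  qed (use h2 h4 in auto)
  moreover have "n \<notin> R ` {..<length t}"
  proof
    assume "n \<in> R ` {..<length t}"
    then obtain i where i: "i < length t" "R i = n" by auto
    have "R i < R (length t)" using h1 i unfolding strict_mono_on_def by auto
    moreover have "R (length t) < Suc n" using h3 ls by auto
    ultimately show False using i by simp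
  qed
  ultimately show "\<exists>r c. emb t s r c \<and> n \<notin> r ` {..<length t}" by blast
next
  assume "\<exists>r c. emb t s r c \<and> n \<notin> r ` {..<length t}"
  then obtain r c where e: "emb t s r c" and nr: "n \<notin> r ` {..<length t}" by blast
  have rl0: "\<And>i. i < length t \<Longrightarrow> r i < Suc n" using e ls unfolding emb_def by auto
  have rl: "\<And>i. i < length t \<Longrightarrow> r i < n" using rl0 nr by (metis image_eqI lessThan_iff less_SucE)
  have smr: "\<And>x y. x < y \<Longrightarrow> y < length t \<Longrightarrow> r x < r y" using e unfolding emb_def strict_mono_on_def by auto
  have smc: "strict_mono_on {..<length t} c" and cim: "c ` {..<length t} \<subseteq> {..<length s}" using e unfolding emb_def by auto
  have cnd: "\<And>i j. i < length t \<Longrightarrow> j < length t \<Longrightarrow> (i + 1 = t ! j) = (r i + 1 = s ! c j)" using e unfolding emb_def by blast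
  define R where "R = (\<lambda>i. if i < length t then r i else n)"
  show "submatrix (ext_mat t Top) (perm_mat s)" unfolding sub_top_unf
  proof (intro exI conjI)
    show "strict_mono_on {..<Suc (length t)} R"
      unfolding strict_mono_on_def R_def using smr rl by auto
    show "R ` {..<Suc (length t)} \<subseteq> {..<length s}" using rl ls unfolding R_def by fastforce
    show "\<forall>i<Suc (length t). \<forall>j<length t. (i < length t \<and> i + 1 = t ! j) = (R i + 1 = s ! c j)"
    proof (intro allI impI)
      fix i j assume i: "i < Suc (length t)" and j: "j < length t"
      show "(i < length t \<and> i + 1 = t ! j) = (R i + 1 = s ! c j)"
      proof (cases "i < length t")
        case True then show ?thesis using cnd j unfolding R_def by auto
      next
        case False
        have "s ! c j = r (t ! j - 1) + 1" "t ! j - 1 < length t" using emb_val'[OF e pt j] by auto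
        then have "s ! c j \<noteq> n + 1" using rl by fastforce
        then show ?thesis using False unfolding R_def by auto
      qed
    qed
  qed (rule smc, rule cim)
qed

lemma sub_bot:
  assumes pt: "is_perm t" and ps: "is_perm s" and ls: "length s = Suc n"
  shows "submatrix (ext_mat t Bottom) (perm_mat s) \<longleftrightarrow> (\<exists>r c. emb t s r c \<and> 0 \<notin> r ` {..<length t})"
proof
  assume "submatrix (ext_mat t Bottom) (perm_mat s)"
  then obtain R c where h1: "strict_mono_on {..<Suc (length t)} R" and h2: "strict_mono_on {..<length t} c"
    and h3: "R ` {..<Suc (length t)} \<subseteq> {..<length s}" and h4: "c ` {..<length t} \<subseteq> {..<length s}"
    and h5: "\<forall>i<Suc (length t). \<forall>j<length t. (0 < i \<and> i - 1 + 1 = t ! j) = (R i + 1 = s ! c j)"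
    unfolding sub_bot_unf by blast
  have "emb t s (\<lambda>i. R (Suc i)) c" unfolding emb_def
  proof (intro conjI)
    show "strict_mono_on {..<length t} (\<lambda>i. R (Suc i))" using h1 unfolding strict_mono_on_def by auto
    show "(\<lambda>i. R (Suc i)) ` {..<length t} \<subseteq> {..<length s}" using h3 by (auto simp: image_subset_iff)
    show "\<forall>i<length t. \<forall>j<length t. (i + 1 = t ! j) = (R (Suc i) + 1 = s ! c j)"
    proof (intro allI impI)
      fix i j assume i: "i < length t" and j: "j < length t"
      have "Suc i < Suc (length t)" using i by simp
      then have "(0 < Suc i \<and> Suc i - 1 + 1 = t ! j) = (R (Suc i) + 1 = s ! c j)" using h5 j by blast
      then show "(i + 1 = t ! j) = (R (Suc i) + 1 = s ! c j)" by simp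
    qed
  qed (rule h2, rule h4)
  moreover have "0 \<notin> (\<lambda>i. R (Suc i)) ` {..<length t}"
  proof
    assume "0 \<in> (\<lambda>i. R (Suc i)) ` {..<length t}"
    then obtain i where i: "i < length t" "R (Suc i) = 0" by auto
    have "R 0 < R (Suc i)" using strict_mono_onD[OF h1, of 0 "Suc i"] i by simp
    then show False using i by simp
  qed
  ultimately show "\<exists>r c. emb t s r c \<and> 0 \<notin> r ` {..<length t}" by blast
next
  assume "\<exists>r c. emb t s r c \<and> 0 \<notin> r ` {..<length t}"
  then obtain r c where e: "emb t s r c" and nr: "0 \<notin> r ` {..<length t}" by blast
  have rl0: "\<And>i. i < length t \<Longrightarrow> r i < Suc n" using e ls unfolding emb_def by auto
  have rl: "\<And>i. i < length t \<Longrightarrow> 0 < r i" using nr by (metis image_eqI lessThan_iff gr0I)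
  have smr: "\<And>x y. x < y \<Longrightarrow> y < length t \<Longrightarrow> r x < r y" using e unfolding emb_def strict_mono_on_def by auto
  have smc: "strict_mono_on {..<length t} c" and cim: "c ` {..<length t} \<subseteq> {..<length s}" using e unfolding emb_def by auto
  have cnd: "\<And>i j. i < length t \<Longrightarrow> j < length t \<Longrightarrow> (i + 1 = t ! j) = (r i + 1 = s ! c j)" using e unfolding emb_def by blast
  define R where "R = (\<lambda>i. if i = 0 then 0 else r (i - 1))"
  show "submatrix (ext_mat t Bottom) (perm_mat s)" unfolding sub_bot_unf
  proof (intro exI conjI)
    show "strict_mono_on {..<Suc (length t)} R"
    proof (rule strict_mono_onI)
      fix x y assume "x \<in> {..<Suc (length t)}" "y \<in> {..<Suc (length t)}" "x < y"
      then show "R x < R y" unfolding R_def using smr[of "x - 1" "y - 1"] rl[of "y - 1"] by auto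
    qed
    show "R ` {..<Suc (length t)} \<subseteq> {..<length s}"
    proof
      fix y assume "y \<in> R ` {..<Suc (length t)}"
      then obtain i where i: "i < Suc (length t)" "y = R i" by auto
      then show "y \<in> {..<length s}" unfolding R_def using rl0[of "i - 1"] ls by (cases "i = 0") auto
    qed
    show "\<forall>i<Suc (length t). \<forall>j<length t. (0 < i \<and> i - 1 + 1 = t ! j) = (R i + 1 = s ! c j)"
    proof (intro allI impI)
      fix i j assume i: "i < Suc (length t)" and j: "j < length t"
      show "(0 < i \<and> i - 1 + 1 = t ! j) = (R i + 1 = s ! c j)"
      proof (cases "i = 0")
        case False then show ?thesis using cnd[of "i - 1" j] i j unfolding R_def by auto
      next
        case True
        have "s ! c j = r (t ! j - 1) + 1" "t ! j - 1 < length t" using emb_val'[OF e pt j] by auto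
        then have "s ! c j \<noteq> 1" using rl by fastforce
        then show ?thesis using True unfolding R_def by auto
      qed
    qed
  qed (rule smc, rule cim)
qed

lemma sub_right:
  assumes pt: "is_perm t" and ps: "is_perm s" and ls: "length s = Suc n"
  shows "submatrix (ext_mat t Right) (perm_mat s) \<longleftrightarrow> (\<exists>r c. emb t s r c \<and> n \<notin> c ` {..<length t})"
proof
  assume "submatrix (ext_mat t Right) (perm_mat s)"
  then obtain r C where h1: "strict_mono_on {..<length t} r" and h2: "strict_mono_on {..<Suc (length t)} C"
    and h3: "r ` {..<length t} \<subseteq> {..<length s}" and h4: "C ` {..<Suc (length t)} \<subseteq> {..<length s}"
    and h5: "\<forall>i<length t. \<forall>j<Suc (length t). (j < length t \<and> i + 1 = t ! j) = (r i + 1 = s ! C j)"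
    unfolding sub_right_unf by blast
  have "emb t s r C" unfolding emb_def
  proof (intro conjI)
    show "strict_mono_on {..<length t} C" using h2 unfolding strict_mono_on_def by auto
    show "C ` {..<length t} \<subseteq> {..<length s}" using h4 by (auto simp: image_subset_iff)
    show "\<forall>i<length t. \<forall>j<length t. (i + 1 = t ! j) = (r i + 1 = s ! C j)"
    proof (intro allI impI)
      fix i j assume i: "i < length t" and j: "j < length t"
      have "j < Suc (length t)" using j by simp
      then have "(j < length t \<and> i + 1 = t ! j) = (r i + 1 = s ! C j)" using h5 i by blast
      then show "(i + 1 = t ! j) = (r i + 1 = s ! C j)" using j by simp
    qed
  qed (rule h1, rule h3)
  moreover have "n \<notin> C ` {..<length t}"
  proof
    assume "n \<in> C ` {..<length t}"
    then obtain i where i: "i < length t" "C i = n" by auto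
    have "C i < C (length t)" using h2 i unfolding strict_mono_on_def by auto
    moreover have "C (length t) < Suc n" using h4 ls by auto
    ultimately show False using i by simp
  qed
  ultimately show "\<exists>r c. emb t s r c \<and> n \<notin> c ` {..<length t}" by blast
next
  assume "\<exists>r c. emb t s r c \<and> n \<notin> c ` {..<length t}"
  then obtain r c where e: "emb t s r c" and nc: "n \<notin> c ` {..<length t}" by blast
  have cl0: "\<And>i. i < length t \<Longrightarrow> c i < Suc n" using e ls unfolding emb_def by auto
  have cl: "\<And>i. i < length t \<Longrightarrow> c i < n" using cl0 nc by (metis image_eqI lessThan_iff less_SucE)
  have smc: "\<And>x y. x < y \<Longrightarrow> y < length t \<Longrightarrow> c x < c y" using e unfolding emb_def strict_mono_on_def by auto
  have smr: "strict_mono_on {..<length t} r" and rim: "r ` {..<length t} \<subseteq> {..<length s}" using e unfolding emb_def by auto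
  have cnd: "\<And>i j. i < length t \<Longrightarrow> j < length t \<Longrightarrow> (i + 1 = t ! j) = (r i + 1 = s ! c j)" using e unfolding emb_def by blast
  have sn: "s ! n = (s ! n - 1) + 1" using perm_nth[OF ps, of n] ls by auto
  define C where "C = (\<lambda>i. if i < length t then c i else n)"
  show "submatrix (ext_mat t Right) (perm_mat s)" unfolding sub_right_unf
  proof (intro exI conjI)
    show "strict_mono_on {..<Suc (length t)} C"
      unfolding strict_mono_on_def C_def using smc cl by auto
    show "C ` {..<Suc (length t)} \<subseteq> {..<length s}" using cl ls unfolding C_def by fastforce
    show "\<forall>i<length t. \<forall>j<Suc (length t). (j < length t \<and> i + 1 = t ! j) = (r i + 1 = s ! C j)"
    proof (intro allI impI)
      fix i j assume i: "i < length t" and j: "j < Suc (length t)"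
      show "(j < length t \<and> i + 1 = t ! j) = (r i + 1 = s ! C j)"
      proof (cases "j < length t")
        case True then show ?thesis using cnd i unfolding C_def by auto
      next
        case False
        have "r i + 1 \<noteq> s ! n" using emb_col_row[OF e pt ps _ sn nc i] ls by simp
        then show ?thesis using False unfolding C_def by auto
      qed
    qed
  qed (rule smr, rule rim)
qed

lemma sub_left:
  assumes pt: "is_perm t" and ps: "is_perm s" and ls: "length s = Suc n"
  shows "submatrix (ext_mat t Left) (perm_mat s) \<longleftrightarrow> (\<exists>r c. emb t s r c \<and> 0 \<notin> c ` {..<length t})"
proof
  assume "submatrix (ext_mat t Left) (perm_mat s)"
  then obtain r C where h1: "strict_mono_on {..<length t} r" and h2: "strict_mono_on {..<Suc (length t)} C"
    and h3: "r ` {..<length t} \<subseteq> {..<length s}" and h4: "C ` {..<Suc (length t)} \<subseteq> {..<length s}"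
    and h5: "\<forall>i<length t. \<forall>j<Suc (length t). (0 < j \<and> i + 1 = t ! (j - 1)) = (r i + 1 = s ! C j)"
    unfolding sub_left_unf by blast
  have "emb t s r (\<lambda>j. C (Suc j))" unfolding emb_def
  proof (intro conjI)
    show "strict_mono_on {..<length t} (\<lambda>j. C (Suc j))" using h2 unfolding strict_mono_on_def by auto
    show "(\<lambda>j. C (Suc j)) ` {..<length t} \<subseteq> {..<length s}" using h4 by (auto simp: image_subset_iff)
    show "\<forall>i<length t. \<forall>j<length t. (i + 1 = t ! j) = (r i + 1 = s ! C (Suc j))"
    proof (intro allI impI)
      fix i j assume i: "i < length t" and j: "j < length t"
      have "Suc j < Suc (length t)" using j by simp
      then have "(0 < Suc j \<and> i + 1 = t ! (Suc j - 1)) = (r i + 1 = s ! C (Suc j))" using h5 i by blast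
      then show "(i + 1 = t ! j) = (r i + 1 = s ! C (Suc j))" by simp
    qed
  qed (rule h1, rule h3)
  moreover have "0 \<notin> (\<lambda>j. C (Suc j)) ` {..<length t}"
  proof
    assume "0 \<in> (\<lambda>j. C (Suc j)) ` {..<length t}"
    then obtain i where i: "i < length t" "C (Suc i) = 0" by auto
    have "C 0 < C (Suc i)" using strict_mono_onD[OF h2, of 0 "Suc i"] i by simp
    then show False using i by simp
  qed
  ultimately show "\<exists>r c. emb t s r c \<and> 0 \<notin> c ` {..<length t}" by blast
next
  assume "\<exists>r c. emb t s r c \<and> 0 \<notin> c ` {..<length t}"
  then obtain r c where e: "emb t s r c" and nc: "0 \<notin> c ` {..<length t}" by blast
  have cl0: "\<And>i. i < length t \<Longrightarrow> c i < Suc n" using e ls unfolding emb_def by auto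
  have cl: "\<And>i. i < length t \<Longrightarrow> 0 < c i" using nc by (metis image_eqI lessThan_iff gr0I)
  have smc: "\<And>x y. x < y \<Longrightarrow> y < length t \<Longrightarrow> c x < c y" using e unfolding emb_def strict_mono_on_def by auto
  have smr: "strict_mono_on {..<length t} r" and rim: "r ` {..<length t} \<subseteq> {..<length s}" using e unfolding emb_def by auto
  have cnd: "\<And>i j. i < length t \<Longrightarrow> j < length t \<Longrightarrow> (i + 1 = t ! j) = (r i + 1 = s ! c j)" using e unfolding emb_def by blast
  have s0: "s ! 0 = (s ! 0 - 1) + 1" using perm_nth[OF ps, of 0] ls by auto
  define C where "C = (\<lambda>i. if i = 0 then 0 else c (i - 1))"
  show "submatrix (ext_mat t Left) (perm_mat s)" unfolding sub_left_unf
  proof (intro exI conjI)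
    show "strict_mono_on {..<Suc (length t)} C"
    proof (rule strict_mono_onI)
      fix x y assume "x \<in> {..<Suc (length t)}" "y \<in> {..<Suc (length t)}" "x < y"
      then show "C x < C y" unfolding C_def using smc[of "x - 1" "y - 1"] cl[of "y - 1"] by auto
    qed
    show "C ` {..<Suc (length t)} \<subseteq> {..<length s}"
    proof
      fix y assume "y \<in> C ` {..<Suc (length t)}"
      then obtain i where i: "i < Suc (length t)" "y = C i" by auto
      then show "y \<in> {..<length s}" unfolding C_def using cl0[of "i - 1"] ls by (cases "i = 0") auto
    qed
    show "\<forall>i<length t. \<forall>j<Suc (length t). (0 < j \<and> i + 1 = t ! (j - 1)) = (r i + 1 = s ! C j)"
    proof (intro allI impI)
      fix i j assume i: "i < length t" and j: "j < Suc (length t)"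
      show "(0 < j \<and> i + 1 = t ! (j - 1)) = (r i + 1 = s ! C j)"
      proof (cases "j = 0")
        case False then show ?thesis using cnd[of i "j - 1"] i j unfolding C_def by auto
      next
        case True
        have "r i + 1 \<noteq> s ! 0" using emb_col_row[OF e pt ps _ s0 nc i] ls by simp
        then show ?thesis using True unfolding C_def by auto
      qed
    qed
  qed (rule smr, rule rim)
qed


fun spec :: "side \<Rightarrow> nat list \<Rightarrow> nat \<times> nat" where
  "spec Top s = (THE a. a < length s \<and> s ! a = length s, length s - 1)"
| "spec Bottom s = (THE a. a < length s \<and> s ! a = 1, 0)"
| "spec Right s = (length s - 1, s ! (length s - 1) - 1)"
| "spec Left s = (0, s ! 0 - 1)"

fun Line :: "side \<Rightarrow> nat \<Rightarrow> (nat \<times> nat) set" where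
  "Line Top n = (\<lambda>a. (a, n)) ` {..n}"
| "Line Bottom n = (\<lambda>a. (a, 0)) ` {..n}"
| "Line Right n = (\<lambda>b. (n, b)) ` {..n}"
| "Line Left n = (\<lambda>b. (0, b)) ` {..n}"

lemma card_Line: "card (Line x n) = Suc n"
  by (cases x) (simp_all add: card_image inj_on_def)

lemma Line_le: "p \<in> Line x n \<Longrightarrow> fst p \<le> n \<and> snd p \<le> n"
  by (cases x) auto

lemma perm_ex1: "is_perm s \<Longrightarrow> 1 \<le> v \<Longrightarrow> v \<le> length s \<Longrightarrow> \<exists>!a. a < length s \<and> s ! a = v"
proof -
  assume p: "is_perm s" and v: "1 \<le> v" "v \<le> length s"
  have "v - 1 < length s" using v by simp
  then have "\<exists>j<length s. s ! j = v - 1 + 1" by (rule perm_index[OF p])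
  then obtain a where a: "a < length s" "s ! a = v" using v by auto
  show ?thesis
  proof (rule ex1I[of _ a])
    show "a < length s \<and> s ! a = v" using a by simp
    fix a' assume "a' < length s \<and> s ! a' = v"
    then show "a' = a" using perm_inj[OF p] a by metis
  qed
qed

lemma the_pos: "is_perm s \<Longrightarrow> 1 \<le> v \<Longrightarrow> v \<le> length s \<Longrightarrow>
   (THE a. a < length s \<and> s ! a = v) < length s \<and> s ! (THE a. a < length s \<and> s ! a = v) = v"
  using theI'[OF perm_ex1] by blast

lemma the_pos_eq: "is_perm s \<Longrightarrow> a < length s \<Longrightarrow> s ! a = v \<Longrightarrow> (THE a. a < length s \<and> s ! a = v) = a"
  using the1_equality[OF perm_ex1] perm_nth by blast

lemma spec_ok: "is_perm s \<Longrightarrow> length s = Suc n \<Longrightarrow>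
  spec x s \<in> Line x n \<and> fst (spec x s) < length s \<and> s ! fst (spec x s) = snd (spec x s) + 1"
proof (cases x)
  case Top
  assume p: "is_perm s" and l: "length s = Suc n"
  then show ?thesis using Top the_pos[OF p, of "length s"] by auto
next
  case Bottom
  assume p: "is_perm s" and l: "length s = Suc n"
  then show ?thesis using Bottom the_pos[OF p, of 1] by auto
next
  case Right
  assume p: "is_perm s" and l: "length s = Suc n"
  then show ?thesis using Right perm_nth[OF p, of n] by auto
next
  case Left
  assume p: "is_perm s" and l: "length s = Suc n"
  then show ?thesis using Left perm_nth[OF p, of 0] by auto
qed

lemma spec_uniq: "is_perm s \<Longrightarrow> length s = Suc n \<Longrightarrow> p \<in> Line x n \<Longrightarrow> s ! fst p = snd p + 1 \<Longrightarrow> spec x s = p"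
proof (cases x)
  case Top
  assume ps: "is_perm s" and l: "length s = Suc n" and "p \<in> Line x n" and sp: "s ! fst p = snd p + 1"
  then obtain a where a: "a \<le> n" "p = (a, n)" using Top by auto
  then show ?thesis using Top the_pos_eq[OF ps, of a] l sp by auto
next
  case Bottom
  assume ps: "is_perm s" and l: "length s = Suc n" and "p \<in> Line x n" and sp: "s ! fst p = snd p + 1"
  then obtain a where a: "a \<le> n" "p = (a, 0)" using Bottom by auto
  then show ?thesis using Bottom the_pos_eq[OF ps, of a] l sp by auto
next
  case Right
  assume ps: "is_perm s" and l: "length s = Suc n" and "p \<in> Line x n" and sp: "s ! fst p = snd p + 1"
  then obtain b where "p = (n, b)" using Right by auto
  then show ?thesis using Right l sp by auto
next
  case Left
  assume ps: "is_perm s" and l: "length s = Suc n" and "p \<in> Line x n" and sp: "s ! fst p = snd p + 1"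
  then obtain b where "p = (0, b)" using Left by auto
  then show ?thesis using Left l sp by auto
qed

lemma sub_char:
  assumes pt: "is_perm t" and ps: "is_perm s" and ls: "length s = Suc n"
  shows "submatrix (ext_mat t x) (perm_mat s) \<longleftrightarrow> pattern t (del s (fst (spec x s)) (snd (spec x s)))"
proof -
  obtain a b where ab: "spec x s = (a, b)" by fastforce
  have ok: "a < length s" "s ! a = b + 1" "(a, b) \<in> Line x n" using spec_ok[OF ps ls, of x] ab by auto
  have "submatrix (ext_mat t x) (perm_mat s) \<longleftrightarrow> (\<exists>r c. emb t s r c \<and> a \<notin> c ` {..<length t} \<and> b \<notin> r ` {..<length t})"
  proof (cases x)
    case Top
    then have "b = n" using ok(3) by auto
    then show ?thesis using Top sub_top[OF pt ps ls] emb_row_col[OF _ pt ok(2)] by blast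
  next
    case Bottom
    then have "b = 0" using ok(3) by auto
    then show ?thesis using Bottom sub_bot[OF pt ps ls] emb_row_col[OF _ pt ok(2)] by blast
  next
    case Right
    then have "a = n" using ok(3) by auto
    then show ?thesis using Right sub_right[OF pt ps ls] emb_col_row'[OF _ pt ps ok(1) ok(2)] by blast
  next
    case Left
    then have "a = 0" using ok(3) by auto
    then show ?thesis using Left sub_left[OF pt ps ls] emb_col_row'[OF _ pt ps ok(1) ok(2)] by blast
  qed
  also have "\<dots> \<longleftrightarrow> pattern t (del s a b)" by (rule avoid_iff_pattern[OF pt ps ok(1) ok(2)])
  finally show ?thesis using ab by simp
qed

lemma av_char:
  assumes pc: "perm_class C" and ps: "is_perm s" and ls: "length s = Suc n"
  shows "s \<in> Av_mat (ext_set (p_basis C) x) \<longleftrightarrow> del s (fst (spec x s)) (snd (spec x s)) \<in> C"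
proof -
  have ok: "fst (spec x s) < length s" "s ! fst (spec x s) = snd (spec x s) + 1" using spec_ok[OF ps ls, of x] by auto
  have dp: "is_perm (del s (fst (spec x s)) (snd (spec x s)))" by (rule del_perm[OF ps ok])
  have "s \<in> Av_mat (ext_set (p_basis C) x) \<longleftrightarrow> (\<forall>t\<in>p_basis C. \<not> submatrix (ext_mat t x) (perm_mat s))"
    unfolding Av_mat_def ext_set_def using ps by auto
  also have "\<dots> \<longleftrightarrow> (\<forall>t\<in>p_basis C. \<not> pattern t (del s (fst (spec x s)) (snd (spec x s))))"
    using sub_char[OF _ ps ls] unfolding p_basis_def by auto
  also have "\<dots> \<longleftrightarrow> del s (fst (spec x s)) (snd (spec x s)) \<in> C" using class_char[OF pc] dp by blast
  finally show ?thesis .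
qed

lemma count_suc:
  assumes pc: "perm_class C"
  shows "card {s \<in> Av_mat (ext_set (p_basis C) x). length s = Suc n} = Suc n * card {s \<in> C. length s = n}"
proof -
  define A where "A = {s \<in> Av_mat (ext_set (p_basis C) x). length s = Suc n}"
  define B where "B = Line x n \<times> {s \<in> C. length s = n}"
  define f where "f = (\<lambda>s. (spec x s, del s (fst (spec x s)) (snd (spec x s))))"
  define g where "g = (\<lambda>(p::nat\<times>nat, s'). ins s' (fst p) (snd p))"
  have Aperm: "\<And>s. s \<in> A \<Longrightarrow> is_perm s \<and> length s = Suc n" unfolding A_def Av_mat_def by auto
  have Cperm: "\<And>s. s \<in> C \<Longrightarrow> is_perm s" using pc unfolding perm_class_def by auto
  have "bij_betw f A B"
  proof (rule bij_betw_byWitness[where f' = g])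
    show "\<forall>s\<in>A. g (f s) = s"
    proof
      fix s assume s: "s \<in> A"
      then have ok: "fst (spec x s) < length s" "s ! fst (spec x s) = snd (spec x s) + 1"
        using spec_ok Aperm by blast+
      show "g (f s) = s" unfolding f_def g_def using ins_del[OF _ ok] Aperm[OF s] by simp
    qed
    show "f ` A \<subseteq> B"
    proof
      fix y assume "y \<in> f ` A"
      then obtain s where s: "s \<in> A" "y = f s" by auto
      have "spec x s \<in> Line x n" using spec_ok Aperm[OF s(1)] by blast
      moreover have "del s (fst (spec x s)) (snd (spec x s)) \<in> C"
        using av_char[OF pc] Aperm[OF s(1)] s(1) unfolding A_def by blast
      ultimately show "y \<in> B" unfolding B_def using s Aperm[OF s(1)] by (simp add: f_def)
    qed
    have gB: "\<And>p s'. (p, s') \<in> B \<Longrightarrow> is_perm (ins s' (fst p) (snd p)) \<and> length (ins s' (fst p) (snd p)) = Suc n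
        \<and> spec x (ins s' (fst p) (snd p)) = p \<and> del (ins s' (fst p) (snd p)) (fst p) (snd p) = s'"
    proof -
      fix p s' assume "(p, s') \<in> B"
      then have p: "p \<in> Line x n" and s': "s' \<in> C" "length s' = n" unfolding B_def by auto
      have le: "fst p \<le> length s'" "snd p \<le> length s'" using Line_le[OF p] s' by auto
      have pi: "is_perm (ins s' (fst p) (snd p))" using ins_perm[OF Cperm[OF s'(1)] le] .
      have li: "length (ins s' (fst p) (snd p)) = Suc n" using s' by simp
      have "spec x (ins s' (fst p) (snd p)) = p" using spec_uniq[OF pi li p] ins_a[OF le(1)] by simp
      then show "?thesis p s'" using pi li del_ins[OF Cperm[OF s'(1)] le(1)] by simp
    qed
    show "\<forall>y\<in>B. f (g y) = y"
    proof
      fix y assume y: "y \<in> B"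
      obtain p s' where ps: "y = (p, s')" by fastforce
      show "f (g y) = y" using gB[of p s'] y ps unfolding f_def g_def by simp
    qed
    show "g ` B \<subseteq> A"
    proof
      fix z assume "z \<in> g ` B"
      then obtain p s' where ps: "(p, s') \<in> B" "z = ins s' (fst p) (snd p)" unfolding g_def by auto
      have "s' \<in> C" using ps unfolding B_def by auto
      then show "z \<in> A" using gB[OF ps(1)] av_char[OF pc, of z n x] ps unfolding A_def by auto
    qed
  qed
  then have "card A = card B" by (rule bij_betw_same_card)
  then show ?thesis unfolding A_def B_def by (simp add: card_cartesian_product card_Line)
qed

lemma sub_empty: "submatrix M (perm_mat []) \<Longrightarrow> nrows M = 0 \<and> ncols M = 0"
  unfolding submatrix_def perm_mat_def nrows_def ncols_def by (auto simp: image_subset_iff)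

lemma count_zero: "card {s \<in> Av_mat (ext_set B x). length s = 0} = 1"
proof -
  have "[] \<in> Av_mat (ext_set B x)"
    unfolding Av_mat_def ext_set_def
  proof (intro CollectI conjI ballI)
    show "is_perm []" unfolding is_perm_def by simp
    fix M assume "M \<in> (\<lambda>t. ext_mat t x) ` B"
    then obtain t where "M = ext_mat t x" by auto
    then show "\<not> submatrix M (perm_mat [])" using sub_empty[of M] by (cases x) (auto simp: nrows_def ncols_def)
  qed
  then have "{s \<in> Av_mat (ext_set B x). length s = 0} = {[]}" by auto
  then show ?thesis by simp
qed


theorem corollary3:
  fixes C :: "nat \<Rightarrow> nat list set"
  assumes "perm_class (C 1)" and "perm_class (C 2)"
    and "wilf_equiv (C 1) (C 2)"
  shows "\<forall>i\<in>{1::nat, 2}. \<forall>j\<in>{1::nat, 2}. \<forall>x y.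
           wilf_equiv (Av_mat (ext_set (p_basis (C i)) x)) (Av_mat (ext_set (p_basis (C j)) y))"
proof (intro ballI allI)
  fix i j :: nat and x y
  assume i: "i \<in> {1, 2}" and j: "j \<in> {1, 2}"
  have pci: "perm_class (C i)" and pcj: "perm_class (C j)" using i j assms by auto
  have eq: "\<And>n. card {s \<in> C i. length s = n} = card {s \<in> C j. length s = n}"
    using i j assms(3) unfolding wilf_equiv_def by auto
  show "wilf_equiv (Av_mat (ext_set (p_basis (C i)) x)) (Av_mat (ext_set (p_basis (C j)) y))"
    unfolding wilf_equiv_def
  proof
    fix n show "card {s \<in> Av_mat (ext_set (p_basis (C i)) x). length s = n} =
                card {s \<in> Av_mat (ext_set (p_basis (C j)) y). length s = n}"
    proof (cases n)
      case 0 then show ?thesis using count_zero by simp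
    next
      case (Suc m) then show ?thesis using count_suc[OF pci] count_suc[OF pcj] eq by simp
    qed
  qed
qed

end
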